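(* Let $c>0$, $\lambda>0$ and, for $t>0$ and $\mathbf{x}\in\mathbb{R}^3$ with $\|\mathbf{x}\|<ct$, let $$u(\mathbf{x},t)=\frac{e^{-\lambda t}}{\pi}\left(\frac{\lambda}{2c}\right)^2\frac{1}{\sqrt{c^2t^2-\|\mathbf{x}\|^2}}\,I_1\!\left(\frac{\lambda}{c}\sqrt{c^2t^2-\|\mathbf{x}\|^2}\right),$$ where $I_1(z)=\sum_{k\ge0}(z/2)^{2k+1}/(k!(k+1)!)$. Then $u$ satisfies the three-dimensional telegraph equation $$\left(\frac{\partial^2}{\partial t^2}+2\lambda\frac{\partial}{\partial t}-c^2\Delta\right)u(\mathbf{x},t)=0,\qquad \Delta=\sum_{j=1}^3\frac{\partial^2}{\partial x_j^2},$$ in the region $\{(\mathbf{x},t):t>0,\ \|\mathbf{x}\|<ct\}$.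
   Context: The function $u$ is (known to be) the density of $P\{\mathbf{U}_3(t)\in d\mathbf{x},\ \cup_{k\ge1}\{N(t)=2k+1\}\}$ for a random flight $\mathbf{U}_3(t)$ in $\mathbb{R}^3$ with speed $c$ whose changes of direction occur only at the even-numbered events of a homogeneous Poisson process $N(t)$ of rate $\lambda$. *)

theory Defs
  imports "HOL-Analysis.Analysis"
begin

definition bessel_I1 :: "real \<Rightarrow> real" where
  "bessel_I1 z = (\<Sum>k. (z / 2) ^ (2 * k + 1) / (fact k * fact (k + 1)))"

text \<open>The density u(x,t); points of space-time are pairs (x,t) with x in R^3.
  The formula is only meaningful for norm x < c t, where the statement is made.\<close>
definition u_dens :: "real \<Rightarrow> real \<Rightarrow> (real ^ 3) \<times> real \<Rightarrow> real" where
  "u_dens c lam p = (let x = fst p; t = snd p; r = sqrt (c^2 * t^2 - (norm x)^2) in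
     exp (- lam * t) / pi * (lam / (2 * c))^2 * (1 / r) * bessel_I1 (lam / c * r))"

definition dir_deriv :: "('a::real_normed_vector \<Rightarrow> real) \<Rightarrow> 'a \<Rightarrow> 'a \<Rightarrow> real" where
  "dir_deriv f p v = deriv (\<lambda>s. f (p + s *\<^sub>R v)) 0"

definition dir_deriv2 :: "('a::real_normed_vector \<Rightarrow> real) \<Rightarrow> 'a \<Rightarrow> 'a \<Rightarrow> real" where
  "dir_deriv2 f p v = deriv (deriv (\<lambda>s. f (p + s *\<^sub>R v))) 0"

definition twice_diff_along :: "('a::real_normed_vector \<Rightarrow> real) \<Rightarrow> 'a \<Rightarrow> 'a \<Rightarrow> bool" where
  "twice_diff_along f p v \<longleftrightarrow>
     (\<forall>\<^sub>F s in nhds 0. (\<lambda>r. f (p + r *\<^sub>R v)) differentiable (at s)) \<and>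
     deriv (\<lambda>r. f (p + r *\<^sub>R v)) differentiable (at 0)"

end

theory Submission
  imports Defs
begin

definition bco :: "real \<Rightarrow> nat \<Rightarrow> real" where
  "bco a n = (a/2)^(2*n+1) / (fact n * fact (n+1))"

definition PS :: "(nat \<Rightarrow> real) \<Rightarrow> real \<Rightarrow> real" where
  "PS c w = (\<Sum>n. c n * w^n)"

definition ebd :: "(nat \<Rightarrow> real) \<Rightarrow> bool" where
  "ebd c \<longleftrightarrow> (\<exists>M K. \<forall>n. \<bar>c n\<bar> \<le> M * K^n / fact n)"

lemma ebd_diffs: assumes "ebd c" shows "ebd (diffs c)"
proof -
  obtain M K where h: "\<And>n. \<bar>c n\<bar> \<le> M * K^n / fact n" using assms ebd_def by blast
  have "\<bar>diffs c n\<bar> \<le> (M*K) * K^n / fact n" for n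
  proof -
    have "\<bar>diffs c n\<bar> = real (Suc n) * \<bar>c (Suc n)\<bar>" by (simp add: diffs_def abs_mult)
    also have "\<dots> \<le> real (Suc n) * (M * K^(Suc n) / fact (Suc n))"
      by (rule mult_left_mono[OF h]) simp
    also have "\<dots> = (M*K) * K^n / fact n" by (simp add: fact_Suc field_simps del: of_nat_Suc)
    finally show ?thesis .
  qed
  thus ?thesis unfolding ebd_def by blast
qed

lemma ebd_summable: assumes "ebd c" shows "summable (\<lambda>n. c n * y^n)"
proof -
  obtain M K where h: "\<And>n. \<bar>c n\<bar> \<le> M * K^n / fact n" using assms ebd_def by blast
  have s: "summable (\<lambda>n. \<bar>M\<bar> * (inverse (fact n) * (\<bar>K\<bar>*\<bar>y\<bar>)^n))"
    by (intro summable_mult summable_exp)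
  show ?thesis
  proof (rule summable_comparison_test'[OF s])
    fix n :: nat
    have "norm (c n * y^n) = \<bar>c n\<bar> * \<bar>y\<bar>^n" by (simp add: abs_mult power_abs)
    also have "\<dots> \<le> (M * K^n / fact n) * \<bar>y\<bar>^n" by (rule mult_right_mono[OF h]) simp
    also have "\<dots> \<le> (\<bar>M\<bar> * \<bar>K\<bar>^n / fact n) * \<bar>y\<bar>^n"
      apply (rule mult_right_mono) apply (rule divide_right_mono)
      apply (metis abs_ge_self abs_mult power_abs) by simp_all
    also have "\<dots> = \<bar>M\<bar> * (inverse (fact n) * (\<bar>K\<bar>*\<bar>y\<bar>)^n)"
      by (simp add: field_simps power_mult_distrib)
    finally show "norm (c n * y^n) \<le> \<bar>M\<bar> * (inverse (fact n) * (\<bar>K\<bar>*\<bar>y\<bar>)^n)" .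
  qed
qed

lemma ebd_deriv: assumes "ebd c" shows "(PS c has_field_derivative PS (diffs c) w) (at w)"
  unfolding PS_def by (rule termdiffs_strong_converges_everywhere[OF ebd_summable[OF assms]])

lemma ebd_bco: assumes "a > 0" shows "ebd (bco a)"
proof -
  have "\<bar>bco a n\<bar> \<le> (a/2) * ((a/2)^2)^n / fact n" for n
  proof -
    have "\<bar>bco a n\<bar> = (a/2)^(2*n+1) / (fact n * fact (n+1))" using assms by (simp add: bco_def)
    also have "\<dots> \<le> (a/2)^(2*n+1) / (fact n)"
    proof (rule divide_left_mono)
      have "(1::real) \<le> fact (n+1)" by (rule fact_ge_1)
      then show "fact n \<le> fact n * (fact (n+1)::real)"
        by (metis mult.right_neutral mult_left_mono fact_ge_zero)
    qed (use assms in simp_all)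
    also have "\<dots> = (a/2) * ((a/2)^2)^n / fact n" by (simp add: power_mult[symmetric] ac_simps)
    finally show ?thesis .
  qed
  thus ?thesis unfolding ebd_def by blast
qed

lemma bco_rec: "real (n+1) * real (n+2) * bco a (n+1) = (a/2)^2 * bco a n"
  proof -
  have "real (n+1) * real (n+2) * bco a (n+1) = (a/2)^(2*n+3) / (fact n * fact (n+1))"
  proof -
    have f2: "(fact (n+1+1)::real) = real (n+2) * fact (n+1)" by (simp add: fact_Suc)
    have f1: "(fact (n+1)::real) = real (n+1) * fact n" by (simp add: fact_Suc)
    have e: "2*(n+1)+1 = 2*n+3" by simp
    have p: "(fact n::real) > 0" by simp
    have gen: "\<And>p q F X::real. p>0 \<Longrightarrow> q>0 \<Longrightarrow> F>0 \<Longrightarrow>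
       p*q*(X/((p*F)*(q*(p*F)))) = X/(F*(p*F))" by (simp add: field_simps)
    show ?thesis unfolding bco_def f2 e unfolding f1 using p
      by (subst gen) simp_all
  qed
  also have "\<dots> = (a/2)^2 * bco a n"
  proof -
    have e3: "2*n+3 = 2+(2*n+1)" by simp
    have "(a/2)^(2*n+3) = (a/2)^2 * (a/2)^(2*n+1)" by (simp only: e3 power_add)
    then show ?thesis unfolding bco_def by (simp only: times_divide_eq_right)
  qed
  finally show ?thesis .
qed


lemma ode: assumes "a > 0"
  shows "w * PS (diffs (diffs (bco a))) w + 2 * PS (diffs (bco a)) w = (a/2)^2 * PS (bco a) w"
proof -
  let ?b = "bco a"
  define e where "e m = (case m of 0 \<Rightarrow> 0 | Suc k \<Rightarrow> diffs (diffs ?b) k * w^(Suc k))" for m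
  have s2: "(\<lambda>n. diffs (diffs ?b) n * w^n) sums PS (diffs (diffs ?b)) w"
    unfolding PS_def by (rule summable_sums, rule ebd_summable, intro ebd_diffs ebd_bco assms)
  have s1: "(\<lambda>n. diffs ?b n * w^n) sums PS (diffs ?b) w"
    unfolding PS_def by (rule summable_sums, rule ebd_summable, intro ebd_diffs ebd_bco assms)
  have s0: "(\<lambda>n. ?b n * w^n) sums PS ?b w"
    unfolding PS_def by (rule summable_sums, rule ebd_summable, intro ebd_diffs ebd_bco assms)
  have "(\<lambda>n. e (Suc n)) sums (w * PS (diffs (diffs ?b)) w)"
    using sums_mult[OF s2, of w] by (simp add: e_def mult_ac)
  hence se: "e sums (w * PS (diffs (diffs ?b)) w)"
    using sums_Suc_iff[of e] by (simp add: e_def)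
  have sa: "(\<lambda>m. e m + 2 * (diffs ?b m * w^m)) sums (w * PS (diffs (diffs ?b)) w + 2 * PS (diffs ?b) w)"
    by (intro sums_add se sums_mult s1)
  have eq: "e m + 2 * (diffs ?b m * w^m) = (a/2)^2 * (?b m * w^m)" for m
  proof (cases m)
    case 0
    then show ?thesis using bco_rec[of 0 a] by (simp add: e_def diffs_def)
  next
    case (Suc k)
    have r: "real (Suc k + 1) * real (Suc k + 2) * ?b (Suc k + 1) = (a/2)^2 * ?b (Suc k)"
      by (rule bco_rec)
    have "e m + 2 * (diffs ?b m * w^m) = (real (Suc k + 1) * real (Suc k + 2) * ?b (Suc k + 1)) * w^m"
      using Suc by (simp add: e_def diffs_def algebra_simps)
    then show ?thesis using r Suc by simp
  qed
  have "(\<lambda>m. (a/2)^2 * (?b m * w^m)) sums ((a/2)^2 * PS ?b w)" by (rule sums_mult[OF s0])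
  with sa eq show ?thesis using sums_unique2 by fastforce
qed


lemma oned:
  fixes f g g1 g2 :: "real \<Rightarrow> real"
  assumes "open S" "0 \<in> S" "\<And>s. s \<in> S \<Longrightarrow> f s = g s"
    "\<And>s. (g has_field_derivative g1 s) (at s)" "\<And>s. (g1 has_field_derivative g2 s) (at s)"
  shows "(\<forall>\<^sub>F s in nhds 0. f differentiable (at s)) \<and> deriv f differentiable (at 0)
     \<and> deriv f 0 = g1 0 \<and> deriv (deriv f) 0 = g2 0"
proof -
  have df: "(f has_field_derivative g1 s) (at s)" if "s \<in> S" for s
    by (rule has_field_derivative_transform_within_open[OF assms(4) assms(1) that]) (simp add: assms(3))
  have dd: "deriv f s = g1 s" if "s \<in> S" for s using df[OF that] by (rule DERIV_imp_deriv)
  have d2: "(deriv f has_field_derivative g2 0) (at 0)"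
    by (rule has_field_derivative_transform_within_open[OF assms(5) assms(1) assms(2)]) (simp add: dd)
  have ev: "\<forall>\<^sub>F s in nhds 0. f differentiable (at s)"
    unfolding eventually_nhds
  proof (intro exI conjI ballI)
    show "open S" "0 \<in> S" by (fact assms(1), fact assms(2))
    fix s assume "s \<in> S"
    then show "f differentiable (at s)" unfolding real_differentiable_def using df by blast
  qed
  have dd2: "deriv f differentiable (at 0)" unfolding real_differentiable_def using d2 by blast
  show ?thesis using ev dd2 dd[OF assms(2)] DERIV_imp_deriv[OF d2] by simp
qed

lemma quad:
  fixes G G1 G2 :: "real \<Rightarrow> real"
  assumes d1: "\<And>w. (G has_field_derivative G1 w) (at w)"
    and d2: "\<And>w. (G1 has_field_derivative G2 w) (at w)"
  shows "((\<lambda>s. A * exp (B * s) * G (al * s^2 + be * s + ga)) has_field_derivative (A * exp (B * s) * (B * G (al * s^2 + be * s + ga) + G1 (al * s^2 + be * s + ga) * (2 * al * s + be)))) (at s)"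
   and "((\<lambda>s. A * exp (B * s) * (B * G (al * s^2 + be * s + ga) + G1 (al * s^2 + be * s + ga) * (2 * al * s + be))) has_field_derivative (A * exp (B * s) * (B * (B * G (al * s^2 + be * s + ga) + G1 (al * s^2 + be * s + ga) * (2 * al * s + be)) + (B * G1 (al * s^2 + be * s + ga) * (2 * al * s + be) + G2 (al * s^2 + be * s + ga) * (2 * al * s + be) * (2 * al * s + be) + G1 (al * s^2 + be * s + ga) * (2 * al))))) (at s)"
proof -
  have dp: "((\<lambda>s. (al * s^2 + be * s + ga)) has_field_derivative (2 * al * s + be)) (at s)" for s
    by (auto intro!: derivative_eq_intros)
  have dd: "((\<lambda>s. (2 * al * s + be)) has_field_derivative 2 * al) (at s)" for s
    by (auto intro!: derivative_eq_intros)
  have g: "((\<lambda>s. G (al * s^2 + be * s + ga)) has_field_derivative G1 (al * s^2 + be * s + ga) * (2 * al * s + be)) (at s)" for s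
    by (rule DERIV_chain2[OF d1 dp])
  have g1: "((\<lambda>s. G1 (al * s^2 + be * s + ga)) has_field_derivative G2 (al * s^2 + be * s + ga) * (2 * al * s + be)) (at s)" for s
    by (rule DERIV_chain2[OF d2 dp])
  have e: "((\<lambda>s. A * exp (B * s)) has_field_derivative A * exp (B * s) * B) (at s)" for s
    by (auto intro!: derivative_eq_intros)
  show "((\<lambda>s. A * exp (B * s) * G (al * s^2 + be * s + ga)) has_field_derivative (A * exp (B * s) * (B * G (al * s^2 + be * s + ga) + G1 (al * s^2 + be * s + ga) * (2 * al * s + be)))) (at s)"
    by (rule DERIV_cong[OF DERIV_mult[OF e[of s] g[of s]]]) (simp add: algebra_simps)
  have h: "((\<lambda>s. B * G (al * s^2 + be * s + ga) + G1 (al * s^2 + be * s + ga) * (2 * al * s + be)) has_field_derivative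
     (B * (G1 (al * s^2 + be * s + ga) * (2 * al * s + be)) + (G2 (al * s^2 + be * s + ga) * (2 * al * s + be) * (2 * al * s + be) + G1 (al * s^2 + be * s + ga) * (2 * al)))) (at s)"
    by (rule DERIV_cong[OF DERIV_add[OF DERIV_cmult[OF g[of s], of B] DERIV_mult[OF g1[of s] dd[of s]]]]) (simp add: algebra_simps)
  show "((\<lambda>s. A * exp (B * s) * (B * G (al * s^2 + be * s + ga) + G1 (al * s^2 + be * s + ga) * (2 * al * s + be))) has_field_derivative (A * exp (B * s) * (B * (B * G (al * s^2 + be * s + ga) + G1 (al * s^2 + be * s + ga) * (2 * al * s + be)) + (B * G1 (al * s^2 + be * s + ga) * (2 * al * s + be) + G2 (al * s^2 + be * s + ga) * (2 * al * s + be) * (2 * al * s + be) + G1 (al * s^2 + be * s + ga) * (2 * al))))) (at s)"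
    by (rule DERIV_cong[OF DERIV_mult[OF e[of s] h]]) (simp add: algebra_simps)
qed


lemma bessel_PS: assumes "r > 0" "a > 0"
  shows "(1/r) * bessel_I1 (a * r) = PS (bco a) (r^2)"
proof -
  have sm: "summable (\<lambda>k. bco a k * (r^2)^k)" by (intro ebd_summable ebd_bco assms)
  have t: "(a * r / 2) ^ (2 * k + 1) / (fact k * fact (k + 1)) = r * (bco a k * (r^2)^k)" for k
    unfolding bco_def by (simp add: power_mult_distrib power_mult[symmetric] field_simps)
  have "bessel_I1 (a * r) = (\<Sum>k. r * (bco a k * (r^2)^k))"
    unfolding bessel_I1_def t ..
  also have "\<dots> = r * PS (bco a) (r^2)" unfolding PS_def by (rule suminf_mult[OF sm])
  finally show ?thesis using assms by simp
qed

lemma udens_eq: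
  assumes "c > 0" "lam > 0" "c^2 * t^2 - (norm x)^2 > 0"
  shows "u_dens c lam (x, t) = exp (- lam * t) / pi * (lam / (2 * c))^2 * PS (bco (lam/c)) (c^2 * t^2 - (norm x)^2)"
proof -
  define r where "r = sqrt (c^2 * t^2 - (norm x)^2)"
  have r: "r > 0" "r^2 = c^2 * t^2 - (norm x)^2" using assms(3) by (auto simp: r_def)
  have "u_dens c lam (x, t) = exp (- lam * t) / pi * (lam / (2 * c))^2 * ((1 / r) * bessel_I1 (lam / c * r))"
    unfolding u_dens_def Let_def r_def by simp
  also have "(1 / r) * bessel_I1 (lam / c * r) = PS (bco (lam/c)) (r^2)"
    by (rule bessel_PS) (use r assms in auto)
  finally show ?thesis using r by simp
qed


lemma norm_axis_sq: "(norm (x + s *\<^sub>R axis j (1::real)))^2 = (norm x)^2 + 2 * s * (x $ j) + s^2"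
  for x :: "real ^ 'n"
  unfolding power2_norm_eq_inner by (simp add: inner_add_left inner_add_right inner_axis axis_nth
      inner_commute algebra_simps power2_eq_square)



lemma main1d:
  fixes f G G1 G2 :: "real \<Rightarrow> real"
  assumes "open S" "0 \<in> S" "\<And>s. s \<in> S \<Longrightarrow> f s = A * exp (B * s) * G (al * s^2 + be * s + ga)"
    and dG: "\<And>w. (G has_field_derivative G1 w) (at w)"
    and dG1: "\<And>w. (G1 has_field_derivative G2 w) (at w)"
  shows "(\<forall>\<^sub>F s in nhds 0. f differentiable (at s)) \<and> deriv f differentiable (at 0)
     \<and> deriv f 0 = A * (B * G ga + G1 ga * be)
     \<and> deriv (deriv f) 0 = A * (B * (B * G ga + G1 ga * be) + (B * G1 ga * be + G2 ga * be * be + G1 ga * (2 * al)))"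
  using oned[OF assms(1,2,3) quad(1)[OF dG dG1] quad(2)[OF dG dG1]] by simp



theorem theorem4p1:
  fixes c lam t :: real and x :: "real ^ 3"
  assumes "c > 0" and "lam > 0" and "t > 0" and "norm x < c * t"
  shows "twice_diff_along (u_dens c lam) (x, t) (0, 1)
    \<and> (\<forall>j. twice_diff_along (u_dens c lam) (x, t) (axis j 1, 0))
    \<and> dir_deriv2 (u_dens c lam) (x, t) (0, 1) + 2 * lam * dir_deriv (u_dens c lam) (x, t) (0, 1)
        - c^2 * (\<Sum>j\<in>UNIV. dir_deriv2 (u_dens c lam) (x, t) (axis j 1, 0)) = 0"
proof -
  define a where "a = lam / c"
  have a: "a > 0" using assms by (simp add: a_def)
  define G where "G = PS (bco a)"
  define G1 where "G1 = PS (diffs (bco a))"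
  define G2 where "G2 = PS (diffs (diffs (bco a)))"
  have dG: "\<And>w. (G has_field_derivative G1 w) (at w)"
    unfolding G_def G1_def by (rule ebd_deriv, rule ebd_bco[OF a])
  have dG1: "\<And>w. (G1 has_field_derivative G2 w) (at w)"
    unfolding G2_def G1_def by (rule ebd_deriv, rule ebd_diffs, rule ebd_bco[OF a])
  define w where "w = c^2 * t^2 - (norm x)^2"
  have "norm x ^2 < (c*t)^2" using assms norm_ge_zero by (intro power_strict_mono) auto
  hence w: "w > 0" by (simp add: w_def power_mult_distrib)
  define A where "A = exp (- lam * t) / pi * (lam / (2 * c))^2"
  have U: "u_dens c lam (y, r) = A / exp (- lam * t) * exp (- lam * r) * G (c^2 * r^2 - (norm y)^2)"
    if "c^2 * r^2 - (norm y)^2 > 0" for y r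
    using udens_eq[OF assms(1,2) that] by (simp add: A_def G_def a_def)
  define St where "St = {s::real. 0 < c^2 * (t+s)^2 - (norm x)^2}"
  have oSt: "open St" unfolding St_def by (intro open_Collect_less continuous_intros)
  have 0: "0 \<in> St" using w by (simp add: St_def w_def)
  have ft: "u_dens c lam ((x, t) + s *\<^sub>R (0, 1)) = A * exp ((-lam) * s) * G (c^2 * s^2 + (2*c^2*t) * s + w)"
    if "s \<in> St" for s
  proof -
    have "u_dens c lam ((x, t) + s *\<^sub>R (0, 1)) = u_dens c lam (x, t + s)" by simp
    also have "\<dots> = A / exp (- lam * t) * exp (- lam * (t+s)) * G (c^2 * (t+s)^2 - (norm x)^2)"
      using that by (intro U) (simp add: St_def)
    also have "\<dots> = A * exp ((-lam) * s) * G (c^2 * s^2 + (2*c^2*t) * s + w)"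
    proof -
      have e1: "exp (- lam * (t+s)) = exp (- lam * t) * exp ((-lam) * s)"
        by (simp add: exp_add[symmetric] algebra_simps)
      have e2: "c^2 * (t+s)^2 - (norm x)^2 = c^2 * s^2 + (2*c^2*t) * s + w"
        by (simp add: w_def power2_eq_square algebra_simps)
      show ?thesis by (simp only: e1 e2) (simp add: field_simps)
    qed
    finally show ?thesis .
  qed
  note Tt = main1d[OF oSt 0 ft dG dG1]
  have T1: "twice_diff_along (u_dens c lam) (x, t) (0, 1)"
    using Tt unfolding twice_diff_along_def by blast
  have T2: "dir_deriv (u_dens c lam) (x, t) (0, 1) = A * (- lam * G w + G1 w * (2*c^2*t))"
    using Tt unfolding dir_deriv_def by simp
  have T3: "dir_deriv2 (u_dens c lam) (x, t) (0, 1) =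
     A * (- lam * (- lam * G w + G1 w * (2*c^2*t)) + (- lam * G1 w * (2*c^2*t) + G2 w * (2*c^2*t) * (2*c^2*t) + G1 w * (2 * c^2)))"
    using Tt unfolding dir_deriv2_def by simp
  have Sp: "twice_diff_along (u_dens c lam) (x, t) (axis j 1, 0) \<and>
     dir_deriv2 (u_dens c lam) (x, t) (axis j 1, 0) = A * (G2 w * (4 * (x$j)^2) - 2 * G1 w)" for j
  proof -
    define Sj where "Sj = {s::real. 0 < c^2 * t^2 - (norm (x + s *\<^sub>R axis j 1))^2}"
    have oS: "open Sj" unfolding Sj_def by (intro open_Collect_less continuous_intros)
    have 0: "0 \<in> Sj" using w by (simp add: Sj_def w_def)
    have fs: "u_dens c lam ((x, t) + s *\<^sub>R (axis j 1, 0)) = A * exp (0 * s) * G ((-1) * s^2 + (-2 * x$j) * s + w)"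
      if "s \<in> Sj" for s
    proof -
      have "u_dens c lam ((x, t) + s *\<^sub>R (axis j 1, 0)) = u_dens c lam (x + s *\<^sub>R axis j 1, t)" by simp
      also have "\<dots> = A / exp (- lam * t) * exp (- lam * t) * G (c^2 * t^2 - (norm (x + s *\<^sub>R axis j 1))^2)"
        using that by (intro U) (simp add: Sj_def)
      also have "\<dots> = A * exp (0 * s) * G ((-1) * s^2 + (-2 * x$j) * s + w)"
        by (simp add: w_def norm_axis_sq algebra_simps)
      finally show ?thesis .
    qed
    note Tt = main1d[OF oS 0 fs dG dG1]
    have t1: "twice_diff_along (u_dens c lam) (x, t) (axis j 1, 0)"
      unfolding twice_diff_along_def using Tt[THEN conjunct1] Tt[THEN conjunct2, THEN conjunct1] by (rule conjI)
    have "dir_deriv2 (u_dens c lam) (x, t) (axis j 1, 0) = A * (0 * (0 * G w + G1 w * (-2 * x$j)) + (0 * G1 w * (-2 * x$j) + G2 w * (-2 * x$j) * (-2 * x$j) + G1 w * (2 * (-1))))"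
      unfolding dir_deriv2_def by (rule Tt[THEN conjunct2, THEN conjunct2, THEN conjunct2])
    also have "\<dots> = A * (G2 w * (4 * (x$j)^2) - 2 * G1 w)" by algebra
    finally show ?thesis using t1 by blast
  qed
  have nx: "(norm x)^2 = (\<Sum>j\<in>UNIV. (x$j)^2)"
    unfolding power2_norm_eq_inner by (simp add: inner_vec_def power2_eq_square)
  have sum: "(\<Sum>j\<in>UNIV. dir_deriv2 (u_dens c lam) (x, t) (axis j 1, 0)) = A * (G2 w * (4 * (norm x)^2) - 6 * G1 w)"
  proof -
    have "(\<Sum>j\<in>UNIV. dir_deriv2 (u_dens c lam) (x, t) (axis j 1, 0))
        = (\<Sum>j\<in>UNIV. (A*G2 w*4) * (x$j)^2 - A*2*G1 w)"
      using Sp by (intro sum.cong) (simp_all add: algebra_simps)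
    also have "\<dots> = (A*G2 w*4) * (\<Sum>j\<in>UNIV. (x$j)^2) - 3 * (A*2*G1 w)"
      by (simp add: sum_subtractf sum_distrib_left[symmetric])
    finally show ?thesis by (simp add: nx algebra_simps)
  qed
  have ode': "w * G2 w + 2 * G1 w = (a/2)^2 * G w" unfolding G_def G1_def G2_def by (rule ode[OF a])
  have fin: "dir_deriv2 (u_dens c lam) (x, t) (0, 1) + 2 * lam * dir_deriv (u_dens c lam) (x, t) (0, 1)
        - c^2 * (\<Sum>j\<in>UNIV. dir_deriv2 (u_dens c lam) (x, t) (axis j 1, 0))
      = A * (4 * c^2 * (w * G2 w + 2 * G1 w) - lam^2 * G w)"
    unfolding T2 T3 sum w_def by algebra
  also have "\<dots> = 0"
  proof -
    have q: "4 * c^2 * (a/2)^2 = lam^2" using assms by (simp add: a_def power2_eq_square field_simps)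
    have "4 * c^2 * ((a/2)^2 * G w) - lam^2 * G w = (4 * c^2 * (a/2)^2 - lam^2) * G w" by algebra
    then show ?thesis unfolding ode' q by simp
  qed
  finally show ?thesis using T1 Sp by blast
qed



end
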